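(* Let $V$ be an infinite-dimensional vector space over a field $\mathbb{F}$ and $u\in\mathrm{End}(V)$. Assume that $u$ has a dominant eigenvalue $\lambda$ and that $u-\lambda\,\mathrm{id}_V$ has infinite rank. Then there exists a decomposition $V=V_1\oplus V_2$ into linear subspaces stable under $u$ such that: (i) $V_1$ is infinite-dimensional; (ii) the endomorphism $u_{|V_1}$ of $V_1$ has no dominant eigenvalue; (iii) $u(x)=\lambda x$ for all $x\in V_2$.
   Context: For an endomorphism $f$ of an infinite-dimensional vector space $E$, a scalar $\mu$ is a dominant eigenvalue of $f$ if $\operatorname{rk}(f-\mu\,\mathrm{id}_E)<\dim E$. *)

theory Defs
  imports Complex_Main
begin

text \<open>For a subspace S such a basis exists and all
  bases have the same cardinality, so the cardinal of this set is the dimension of S.\<close>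
definition vbasis :: "('a::field \<Rightarrow> 'v::ab_group_add \<Rightarrow> 'v) \<Rightarrow> 'v set \<Rightarrow> 'v set" where
  "vbasis scale S = (SOME B. B \<subseteq> S \<and> \<not> module.dependent scale B \<and> module.span scale B = S)"

definition infinite_dim :: "('a::field \<Rightarrow> 'v::ab_group_add \<Rightarrow> 'v) \<Rightarrow> 'v set \<Rightarrow> bool" where
  "infinite_dim scale S \<longleftrightarrow> infinite (vbasis scale S)"

text \<open>mu is a dominant eigenvalue of the endomorphism of the subspace W induced by f:
  rk(f - mu id) (dimension of the image (f - mu id)(W)) is strictly less than dim W
  (as cardinals).\<close>
definition dominant_eig :: "('a::field \<Rightarrow> 'v::ab_group_add \<Rightarrow> 'v) \<Rightarrow> 'v set \<Rightarrow> ('v \<Rightarrow> 'v) \<Rightarrow> 'a \<Rightarrow> bool" where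
  "dominant_eig scale W f mu \<longleftrightarrow>
     (card_of (vbasis scale ((\<lambda>x. f x - scale mu x) ` W)), card_of (vbasis scale W)) \<in> ordLess"

end

theory Submission
  imports Defs
begin
unbundle cardinal_syntax

lemma card_Un_le_inf:
  assumes "infinite X" "|A| \<le>o |X|" "|B| \<le>o |X|"
  shows "|A \<union> B| \<le>o |X|"
  using card_of_Un_ordLeq_infinite_Field[of "|X|" A B] assms
  using card_of_Card_order[of X] Field_card_of[of X] by simp

lemma finite_le_inf:
  assumes "finite A" "infinite X" shows "|A| \<le>o |X|"
  using ordLeq3_finite_infinite[OF assms] .

lemma lists_card_le:
  assumes inf: "infinite C"
  shows "|lists C| \<le>o |C|"
proof -
  define L where "L n = {xs \<in> lists C. length xs = n}" for n
  have L: "|L n| \<le>o |C|" for n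
  proof (induction n)
    case 0
    have "L 0 = {[]}" by (auto simp: L_def)
    then show ?case using finite_le_inf[OF _ inf, of "{[]}"] by simp
  next
    case (Suc n)
    have "L (Suc n) = (\<lambda>(x,xs). x # xs) ` (C \<times> L n)"
      by (auto simp: L_def length_Suc_conv image_iff)
    then have "|L (Suc n)| \<le>o |C \<times> L n|" using card_of_image by metis
    also have "|C \<times> L n| \<le>o |C \<times> C|" using card_of_Times_mono2[OF Suc] .
    also have "|C \<times> C| \<le>o |C|" using card_of_Times_same_infinite[OF inf] ordIso_iff_ordLeq by blast
    finally show ?case .
  qed
  have "lists C = (\<Union>n\<in>(UNIV::nat set). L n)" by (auto simp: L_def)
  moreover have "|\<Union>n\<in>(UNIV::nat set). L n| \<le>o |C|"
    using card_of_UNION_ordLeq_infinite[OF inf] L inf infinite_iff_card_of_nat by blast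
  ultimately show ?thesis by simp
qed

lemma fin_subsets_card_le:
  assumes inf: "infinite C"
  shows "|{F. F \<subseteq> C \<and> finite F}| \<le>o |C|"
proof -
  have "{F. F \<subseteq> C \<and> finite F} \<subseteq> set ` lists C"
    by (auto simp: image_iff dest!: finite_list)
  then have "|{F. F \<subseteq> C \<and> finite F}| \<le>o |set ` lists C|" by (rule card_of_mono1)
  also have "|set ` lists C| \<le>o |lists C|" by (rule card_of_image)
  also have "|lists C| \<le>o |C|" by (rule lists_card_le[OF inf])
  finally show ?thesis .
qed

context vector_space begin

lemma vbasis_props:
  assumes "subspace S"
  shows "vbasis scale S \<subseteq> S" "independent (vbasis scale S)" "span (vbasis scale S) = S"
proof -
  obtain B where B: "B \<subseteq> S" "independent B" "S \<subseteq> span B" by (rule basis_exists)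
  have "span B = S" using B assms span_minimal by blast
  then have ex: "\<exists>B. B \<subseteq> S \<and> independent B \<and> span B = S" using B by blast
  show "vbasis scale S \<subseteq> S" "independent (vbasis scale S)" "span (vbasis scale S) = S"
    using someI_ex[OF ex] unfolding vbasis_def by auto
qed

lemma in_span_fin:
  assumes "b \<in> span C" shows "\<exists>F. finite F \<and> F \<subseteq> C \<and> b \<in> span F"
proof -
  obtain t r where t: "b = (\<Sum>a\<in>t. r a *s a)" "finite t" "t \<subseteq> C"
    using assms unfolding span_explicit by blast
  have "b \<in> span t" unfolding t(1) by (intro span_sum span_scale span_base)
  then show ?thesis using t by blast
qed

lemma indep_card_le:
  assumes ind: "independent B" and sp: "B \<subseteq> span C"
  shows "|B| \<le>o |C|"
proof (cases "finite C")
  case True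
  then have "finite B \<and> card B \<le> card C" using independent_span_bound ind sp by blast
  then obtain f where "f ` B \<subseteq> C" "inj_on f B" using card_le_inj True by blast
  then show ?thesis using card_of_ordLeq by blast
next
  case inf: False
  define \<phi> where "\<phi> b = (SOME F. finite F \<and> F \<subseteq> C \<and> b \<in> span F)" for b
  have \<phi>: "finite (\<phi> b) \<and> \<phi> b \<subseteq> C \<and> b \<in> span (\<phi> b)" if "b \<in> B" for b
  proof -
    have "\<exists>F. finite F \<and> F \<subseteq> C \<and> b \<in> span F" using in_span_fin sp that by blast
    then show ?thesis unfolding \<phi>_def by (rule someI_ex)
  qed
  have eq: "B = (\<Union>F\<in>\<phi> ` B. {b\<in>B. \<phi> b = F})" by auto
  have "\<phi> ` B \<subseteq> {F. F \<subseteq> C \<and> finite F}" using \<phi> by auto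
  then have I: "|\<phi> ` B| \<le>o |C|"
    by (rule ordLeq_transitive[OF card_of_mono1 fin_subsets_card_le[OF inf]])
  have A: "\<forall>F\<in>\<phi> ` B. |{b\<in>B. \<phi> b = F}| \<le>o |C|"
  proof
    fix F assume "F \<in> \<phi> ` B"
    then obtain b0 where "b0 \<in> B" "F = \<phi> b0" by auto
    then have "finite F" using \<phi> by blast
    moreover have "independent {b\<in>B. \<phi> b = F}" by (rule independent_mono[OF ind]) auto
    moreover have "{b\<in>B. \<phi> b = F} \<subseteq> span F" using \<phi> by blast
    ultimately have "finite {b\<in>B. \<phi> b = F}" using independent_span_bound by blast
    then show "|{b\<in>B. \<phi> b = F}| \<le>o |C|" using finite_le_inf inf by blast
  qed
  show ?thesis by (subst eq) (rule card_of_UNION_ordLeq_infinite[OF inf I A])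
qed

lemma span_disj:
  assumes ind: "independent F" and EF: "E \<subseteq> F" and x1: "x \<in> span E" and x2: "x \<in> span (F - E)"
  shows "x = 0"
proof -
  obtain S q where S1: "x = (\<Sum>a\<in>S. q a *s a)" and S2: "finite S" and S3: "S \<subseteq> E"
    using x1 unfolding span_explicit by blast
  obtain T r where T1: "x = (\<Sum>a\<in>T. r a *s a)" and T2: "finite T" and T3: "T \<subseteq> F - E"
    using x2 unfolding span_explicit by blast
  define w where "w a = (if a \<in> T then r a else - q a)" for a
  have disj: "S \<inter> T = {}" using S3 T3 by blast
  have "(\<Sum>a\<in>S \<union> T. w a *s a) = (\<Sum>a\<in>S. w a *s a) + (\<Sum>a\<in>T. w a *s a)"
    using disj S2 T2 by (rule sum.union_disjoint[rotated 2]) 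
  also have "(\<Sum>a\<in>S. w a *s a) = - x"
  proof -
    have "(\<Sum>a\<in>S. w a *s a) = (\<Sum>a\<in>S. - (q a *s a))"
      using disj by (intro sum.cong) (auto simp: w_def)
    also have "\<dots> = - x" by (simp only: S1 sum_negf)
    finally show ?thesis .
  qed
  also have "(\<Sum>a\<in>T. w a *s a) = x"
    by (simp only: T1) (intro sum.cong, auto simp: w_def)
  finally have z: "(\<Sum>a\<in>S \<union> T. w a *s a) = 0" by simp
  have fin: "finite (S \<union> T)" using S2 T2 by simp
  have sub: "S \<union> T \<subseteq> F" using S3 T3 EF by blast
  have "w a = 0" if "a \<in> T" for a using independentD[OF ind fin sub z] that by blast
  then have "r a = 0" if "a \<in> T" for a using that by (simp add: w_def)
  then have "(\<Sum>a\<in>T. r a *s a) = 0" by simp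
  then show ?thesis by (simp only: T1)
qed

lemma lin_sub:
  assumes lin: "Vector_Spaces.linear scale scale u"
  shows "Vector_Spaces.linear scale scale (\<lambda>x. u x - c *s x)"
proof -
  have add: "u (x + y) = u x + u y" and sc: "u (a *s x) = a *s u x" for x y a
    using lin unfolding Vector_Spaces.linear_iff by auto
  show ?thesis unfolding Vector_Spaces.linear_iff
    using vector_space_axioms
    by (auto simp: add sc algebra_simps)
qed

lemma lin_subspace_image:
  assumes "Vector_Spaces.linear scale scale h" "subspace S"
  shows "subspace (h ` S)"
proof -
  interpret H: Vector_Spaces.linear scale scale h by (rule assms(1))
  show ?thesis by (rule H.subspace_image[OF assms(2)])
qed

lemma main:
  assumes lin: "Vector_Spaces.linear scale scale u"
    and dom: "( |vbasis scale (range (\<lambda>x. u x - lam *s x))|, |vbasis scale UNIV| ) \<in> ordLess"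
    and infG: "infinite (vbasis scale (range (\<lambda>x. u x - lam *s x)))"
  shows "\<exists>V1 V2. subspace V1 \<and> subspace V2 \<and> u ` V1 \<subseteq> V1 \<and> u ` V2 \<subseteq> V2
    \<and> V1 \<inter> V2 = {0} \<and> (\<forall>x. \<exists>a\<in>V1. \<exists>b\<in>V2. x = a + b) \<and> infinite (vbasis scale V1)
    \<and> (\<forall>mu. ( |vbasis scale ((\<lambda>x. u x - mu *s x) ` V1)|, |vbasis scale V1| ) \<notin> ordLess)
    \<and> (\<forall>x\<in>V2. u x = lam *s x)"
proof -
  define g where "g = (\<lambda>x. u x - lam *s x)"
  have lg: "Vector_Spaces.linear scale scale g" unfolding g_def by (rule lin_sub[OF lin])
  interpret G: Vector_Spaces.linear scale scale g by (rule lg)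
  have usc: "u (a *s x) = a *s u x" for x a
    using lin unfolding Vector_Spaces.linear_iff by auto
  have gu: "u x = g x + lam *s x" for x by (simp add: g_def)
  have subG: "subspace (range g)" by (rule lin_subspace_image[OF lg subspace_UNIV])
  define Bg where "Bg = vbasis scale (range g)"
  have Bg: "Bg \<subseteq> range g" "independent Bg" "span Bg = range g"
    using vbasis_props[OF subG] unfolding Bg_def by auto
  have infBg: "infinite Bg" using infG unfolding g_def Bg_def .
  define c where "c b = (SOME x. g x = b)" for b
  have gc: "g (c b) = b" if "b \<in> Bg" for b
  proof -
    have "\<exists>x. g x = b" using Bg(1) that by auto
    then show ?thesis unfolding c_def by (rule someI_ex)
  qed
  define C where "C = c ` Bg"
  have gC: "g ` C = Bg" unfolding C_def image_image using gc by (auto simp: image_iff)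
  have CBg: "|C| \<le>o |Bg|" unfolding C_def by (rule card_of_image)
  define Ker where "Ker = {x. g x = 0}"
  have subK: "subspace Ker" unfolding Ker_def by (rule G.subspace_kernel)
  define K where "K = vbasis scale Ker"
  have K: "K \<subseteq> Ker" "independent K" "span K = Ker"
    using vbasis_props[OF subK] unfolding K_def by auto
  have pre: "\<exists>y\<in>span C. g y = g x" for x
  proof -
    have "g x \<in> span Bg" using Bg(3) by auto
    also have "span Bg = g ` span C" using G.span_image[of C] gC by simp
    finally show ?thesis by auto
  qed
  have cover: "x \<in> span (K \<union> C)" for x
  proof -
    obtain y where y: "y \<in> span C" "g y = g x" using pre by blast
    have "x - y \<in> Ker" using y(2) by (simp add: Ker_def G.diff)
    then have "x - y \<in> span (K \<union> C)" using K(3) span_mono[of K "K \<union> C"] by blast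
    moreover have "y \<in> span (K \<union> C)" using y(1) span_mono[of C "K \<union> C"] by blast
    ultimately have "(x - y) + y \<in> span (K \<union> C)" by (rule span_add)
    then show ?thesis by simp
  qed
  have KBg: "|Bg| \<le>o |K|"
  proof (rule ccontr)
    assume "\<not> |Bg| \<le>o |K|"
    then have "|K| \<le>o |Bg|" using ordLeq_total[OF card_of_Well_order card_of_Well_order] by blast
    then have KC: "|K \<union> C| \<le>o |Bg|" using card_Un_le_inf[OF infBg] CBg by blast
    define BV where "BV = vbasis scale (UNIV::'b set)"
    have BV: "independent BV" using vbasis_props[OF subspace_UNIV] unfolding BV_def by auto
    have "|BV| \<le>o |K \<union> C|" by (rule indep_card_le[OF BV]) (use cover in auto)
    then have "|BV| \<le>o |Bg|" using KC ordLeq_transitive by blast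
    then show False using dom not_ordLess_ordLeq unfolding BV_def Bg_def g_def by blast
  qed
  obtain f where f: "inj_on f Bg" "f ` Bg \<subseteq> K" using KBg card_of_ordLeq[of Bg K] by blast
  define D where "D = f ` Bg"
  have BgD: "|Bg| \<le>o |D|" using f card_of_ordLeq[of Bg D] unfolding D_def by blast
  have DBg: "|D| \<le>o |Bg|" unfolding D_def by (rule card_of_image)
  have DKer: "D \<subseteq> Ker" using f K(1) unfolding D_def by blast
  have indD: "independent D" using f(2) unfolding D_def by (rule independent_mono[OF K(2)])
  define V1 where "V1 = span (Bg \<union> C \<union> D)"
  have subV1: "subspace V1" unfolding V1_def by simp
  have gV1: "g x \<in> V1" for x
  proof -
    have "g x \<in> span Bg" using Bg(3) by auto
    then show ?thesis unfolding V1_def using span_mono[of Bg "Bg \<union> C \<union> D"] by blast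
  qed
  have uV1: "u ` V1 \<subseteq> V1"
  proof
    fix y assume "y \<in> u ` V1"
    then obtain x where x: "x \<in> V1" "y = u x" by blast
    have "g x + lam *s x \<in> V1" unfolding V1_def
      by (rule span_add) (use gV1 x(1) in \<open>auto simp: V1_def intro: span_scale\<close>)
    then show "y \<in> V1" using x(2) gu by simp
  qed
  have V1le: "|vbasis scale V1| \<le>o |Bg|"
  proof -
    have "|vbasis scale V1| \<le>o |Bg \<union> C \<union> D|"
      by (rule indep_card_le) (use vbasis_props[OF subV1] in \<open>auto simp: V1_def\<close>)
    moreover have "|Bg \<union> C \<union> D| \<le>o |Bg|"
      using card_Un_le_inf[OF infBg] CBg DBg ordLeq_refl[OF card_of_Card_order] by blast
    ultimately show ?thesis using ordLeq_transitive by blast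
  qed
  have BgV1: "|Bg| \<le>o |vbasis scale V1|"
    by (rule indep_card_le[OF Bg(2)]) (use vbasis_props[OF subV1] in \<open>auto simp: V1_def intro: span_base\<close>)
  have infV1: "infinite (vbasis scale V1)" using card_of_ordLeq_infinite[OF BgV1 infBg] .
  have nodom: "( |vbasis scale ((\<lambda>x. u x - mu *s x) ` V1)|, |vbasis scale V1| ) \<notin> ordLess" for mu
  proof -
    define W where "W = (\<lambda>x. u x - mu *s x) ` V1"
    have subW: "subspace W" unfolding W_def by (rule lin_subspace_image[OF lin_sub[OF lin] subV1])
    have W: "span (vbasis scale W) = W" using vbasis_props[OF subW] by auto
    have "|Bg| \<le>o |vbasis scale W|"
    proof (cases "mu = lam")
      case True
      have "Bg \<subseteq> W"
      proof
        fix b assume b: "b \<in> Bg"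
        have "c b \<in> V1" unfolding V1_def C_def using b by (auto intro: span_base)
        then show "b \<in> W" unfolding W_def True using gc[OF b] unfolding g_def by force
      qed
      then show ?thesis using indep_card_le[OF Bg(2)] W by blast
    next
      case False
      have "D \<subseteq> W"
      proof
        fix d assume d: "d \<in> D"
        then have gd: "g d = 0" using DKer Ker_def by blast
        then have ud: "u d = lam *s d" by (simp add: gu)
        define e where "e = inverse (lam - mu) *s d"
        have "e \<in> V1" unfolding e_def V1_def using d by (auto intro: span_base span_scale)
        moreover have "u e - mu *s e = d"
        proof -
          have sc_eq: "inverse (lam - mu) * lam - mu * inverse (lam - mu) = inverse (lam - mu) * (lam - mu)"
            by (simp add: left_diff_distrib right_diff_distrib mult.commute)
          have "u e - mu *s e = inverse (lam - mu) *s (lam *s d) - mu *s (inverse (lam - mu) *s d)"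
            unfolding e_def usc ud ..
          also have "\<dots> = (inverse (lam - mu) * lam) *s d - (mu * inverse (lam - mu)) *s d"
            by (simp only: scale_scale)
          also have "\<dots> = (inverse (lam - mu) * lam - mu * inverse (lam - mu)) *s d"
            by (simp only: scale_left_diff_distrib)
          also have "\<dots> = (inverse (lam - mu) * (lam - mu)) *s d"
            by (simp only: sc_eq)
          also have "\<dots> = d" using False by simp
          finally show ?thesis .
        qed
        ultimately show "d \<in> W" unfolding W_def by force
      qed
      then have "|D| \<le>o |vbasis scale W|" using indep_card_le[OF indD] W by blast
      then show ?thesis using BgD ordLeq_transitive by blast
    qed
    then have "|vbasis scale V1| \<le>o |vbasis scale W|" using V1le ordLeq_transitive by blast
    then show ?thesis using not_ordLess_ordLeq unfolding W_def by blast
  qed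
  define Z where "Z = V1 \<inter> Ker"
  have subZ: "subspace Z" unfolding Z_def by (rule subspace_inter[OF subV1 subK])
  define E where "E = vbasis scale Z"
  have E: "E \<subseteq> Z" "independent E" "span E = Z" using vbasis_props[OF subZ] unfolding E_def by auto
  obtain F where F: "E \<subseteq> F" "F \<subseteq> Ker" "independent F" "Ker \<subseteq> span F"
    using maximal_independent_subset_extend[of E Ker] E Z_def by blast
  define V2 where "V2 = span (F - E)"
  have subV2: "subspace V2" unfolding V2_def by simp
  have V2K: "V2 \<subseteq> Ker" unfolding V2_def using F(2) subK by (intro span_minimal) auto
  have uV2: "u x = lam *s x" if "x \<in> V2" for x
    using V2K that by (simp add: gu Ker_def subset_iff)
  have uV2': "u ` V2 \<subseteq> V2"
    using uV2 subV2 unfolding V2_def by (auto intro: span_scale)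
  have inter: "V1 \<inter> V2 = {0}"
  proof
    show "V1 \<inter> V2 \<subseteq> {0}"
    proof
      fix x assume x: "x \<in> V1 \<inter> V2"
      then have "x \<in> span E" using E(3) V2K unfolding Z_def by blast
      moreover have "x \<in> span (F - E)" using x V2_def by blast
      ultimately show "x \<in> {0}" using span_disj[OF F(3) F(1)] by blast
    qed
    show "{0} \<subseteq> V1 \<inter> V2" using subV1 subV2 by (simp add: subspace_0)
  qed
  have sum: "\<exists>a\<in>V1. \<exists>b\<in>V2. x = a + b" for x
  proof -
    obtain y where y: "y \<in> span C" "g y = g x" using pre by blast
    have "x - y \<in> Ker" using y(2) by (simp add: Ker_def G.diff)
    moreover have "E \<union> (F - E) = F" using F(1) by blast
    ultimately have "x - y \<in> span (E \<union> (F - E))" using F(4) by auto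
    then obtain p q where pq: "x - y = p + q" "p \<in> span E" "q \<in> span (F - E)"
      unfolding span_Un by blast
    have "p \<in> V1" using pq(2) E(3) Z_def by blast
    moreover have "y \<in> V1" using y(1) unfolding V1_def using span_mono[of C "Bg \<union> C \<union> D"] by blast
    ultimately have "y + p \<in> V1" using subV1 by (simp add: subspace_add)
    moreover have "x = (y + p) + q"
    proof -
      have "x = (x - y) + y" by simp
      also have "\<dots> = (p + q) + y" by (simp only: pq(1))
      also have "\<dots> = (y + p) + q" by (simp only: ac_simps)
      finally show ?thesis .
    qed
    ultimately show ?thesis using pq(3) V2_def by blast
  qed
  show ?thesis
    apply (rule exI[of _ V1], rule exI[of _ V2])
    apply (intro conjI allI ballI)
    apply (rule subV1)
    apply (rule subV2)
    apply (rule uV1)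
    apply (rule uV2')
    apply (rule inter)
    apply (rule sum)
    apply (rule infV1)
    apply (rule nodom)
    apply (erule uV2)
    done
qed

end


theorem lemma2:
  fixes scale :: "'a::field \<Rightarrow> 'v::ab_group_add \<Rightarrow> 'v"
    and u :: "'v \<Rightarrow> 'v" and lam :: 'a
  assumes "vector_space scale"
    and "infinite_dim scale UNIV"
    and "Vector_Spaces.linear scale scale u"
    and "dominant_eig scale UNIV u lam"
    and "infinite_dim scale (range (\<lambda>x. u x - scale lam x))"
  shows "\<exists>V1 V2. module.subspace scale V1 \<and> module.subspace scale V2
           \<and> u ` V1 \<subseteq> V1 \<and> u ` V2 \<subseteq> V2
           \<and> V1 \<inter> V2 = {0} \<and> (\<forall>x. \<exists>a\<in>V1. \<exists>b\<in>V2. x = a + b)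
           \<and> infinite_dim scale V1
           \<and> (\<forall>mu. \<not> dominant_eig scale V1 u mu)
           \<and> (\<forall>x\<in>V2. u x = scale lam x)"
  using vector_space.main[OF assms(1) assms(3), of lam] assms(4,5)
  unfolding infinite_dim_def dominant_eig_def by blast

end
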